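(* Let $p$ be a real homogeneous polynomial of degree $N$ on $\mathbb{R}^n$ with all coefficients $\ge0$, $p(1,\dots,1)=1$, and $\frac{\partial p}{\partial x_1}(e)=\cdots=\frac{\partial p}{\partial x_n}(e)=k>0$ where $e=(1,\dots,1)$ ($p$ need not be symmetric). Then for every positive definite $A=(a_{ij})\in\mathrm{Sym}^2(\mathbb{R}^n)$: (i) $p(a_{11},a_{22},\dots,a_{nn})^{1/N}\ge(\det A)^{1/n}$; (ii) $p(\lambda_1(A),\dots,\lambda_n(A))^{1/N}\ge(\det A)^{1/n}$, where $\lambda_1(A)\le\lambda_2(A)\le\cdots\le\lambda_n(A)$ are the eigenvalues of $A$ in increasing order.
   Context: $\mathrm{Sym}^2(\mathbb{R}^n)$ is the space of real symmetric $n\times n$ matrices. *)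

theory Defs
  imports "HOL-Analysis.Analysis" "Jordan_Normal_Form.Char_Poly"
begin

definition multi_idx :: "nat \<Rightarrow> nat \<Rightarrow> (nat \<Rightarrow> nat) set" where
  "multi_idx n N = {\<alpha>. (\<forall>i\<ge>n. \<alpha> i = 0) \<and> (\<Sum>i<n. \<alpha> i) = N}"

definition hpoly_eval :: "nat \<Rightarrow> nat \<Rightarrow> ((nat \<Rightarrow> nat) \<Rightarrow> real) \<Rightarrow> (nat \<Rightarrow> real) \<Rightarrow> real" where
  "hpoly_eval n N c x = (\<Sum>\<alpha>\<in>multi_idx n N. c \<alpha> * (\<Prod>i<n. x i ^ \<alpha> i))"

definition pos_def_sym :: "nat \<Rightarrow> real mat \<Rightarrow> bool" where
  "pos_def_sym n A \<longleftrightarrow> A \<in> carrier_mat n n \<and> transpose_mat A = A \<and>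
     (\<forall>v \<in> carrier_vec n. v \<noteq> 0\<^sub>v n \<longrightarrow> v \<bullet> (A *\<^sub>v v) > 0)"

definition sorted_eigenvalues :: "nat \<Rightarrow> real mat \<Rightarrow> real list \<Rightarrow> bool" where
  "sorted_eigenvalues n A ls \<longleftrightarrow> length ls = n \<and> sorted ls \<and>
     char_poly A = (\<Prod>a\<leftarrow>ls. [:- a, 1:])"

end

theory Submission
  imports Defs
begin

definition Q :: "nat \<Rightarrow> real mat \<Rightarrow> (nat \<Rightarrow> real) \<Rightarrow> real" where
  "Q n A x = (\<Sum>i<n. \<Sum>j<n. x i * A $$ (i,j) * x j)"

lemma Q_cong: "(\<And>i. i < n \<Longrightarrow> x i = y i) \<Longrightarrow> Q n A x = Q n A y"
  unfolding Q_def by (intro sum.cong refl) auto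

lemma quad_form: assumes A: "A \<in> carrier_mat n n" and v: "v \<in> carrier_vec n"
  shows "v \<bullet> (A *\<^sub>v v) = Q n A (\<lambda>i. v $ i)"
proof -
  have "v \<bullet> (A *\<^sub>v v) = (\<Sum>i\<in>{0..<n}. v$i * (A *\<^sub>v v)$i)" unfolding scalar_prod_def using A by simp
  also have "... = (\<Sum>i\<in>{0..<n}. v$i * (\<Sum>j\<in>{0..<n}. A$$(i,j) * v$j))"
    using A v by (intro sum.cong refl) (simp add: scalar_prod_def)
  also have "... = Q n A (\<lambda>i. v$i)" unfolding Q_def lessThan_atLeast0 by (simp add: sum_distrib_left mult.assoc)
  finally show ?thesis .
qed

lemma pd_iff: "pos_def_sym n A \<longleftrightarrow> A \<in> carrier_mat n n \<and> transpose_mat A = A \<and>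
   (\<forall>x. (\<exists>i<n. x i \<noteq> 0) \<longrightarrow> Q n A x > 0)"
proof
  assume H: "pos_def_sym n A"
  hence A: "A \<in> carrier_mat n n" "transpose_mat A = A" unfolding pos_def_sym_def by auto
  show "A \<in> carrier_mat n n \<and> transpose_mat A = A \<and> (\<forall>x. (\<exists>i<n. x i \<noteq> 0) \<longrightarrow> Q n A x > 0)"
  proof (intro conjI allI impI A)
    fix x :: "nat \<Rightarrow> real" assume "\<exists>i<n. x i \<noteq> 0"
    then obtain i where i: "i < n" "x i \<noteq> 0" by auto
    define v where "v = vec n x"
    have v: "v \<in> carrier_vec n" unfolding v_def by auto
    have "v \<noteq> 0\<^sub>v n" using i unfolding v_def by (metis index_vec index_zero_vec(1))
    hence "v \<bullet> (A *\<^sub>v v) > 0" using H v unfolding pos_def_sym_def by auto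
    also have "v \<bullet> (A *\<^sub>v v) = Q n A x" unfolding quad_form[OF A(1) v]
      by (rule Q_cong) (auto simp: v_def)
    finally show "Q n A x > 0" .
  qed
next
  assume H: "A \<in> carrier_mat n n \<and> transpose_mat A = A \<and> (\<forall>x. (\<exists>i<n. x i \<noteq> 0) \<longrightarrow> Q n A x > 0)"
  show "pos_def_sym n A" unfolding pos_def_sym_def
  proof (intro conjI ballI impI)
    fix v :: "real vec" assume v: "v \<in> carrier_vec n" "v \<noteq> 0\<^sub>v n"
    have "\<exists>i<n. v $ i \<noteq> 0"
    proof (rule ccontr)
      assume "\<not> ?thesis"
      hence "v = 0\<^sub>v n" using v(1) by (intro eq_vecI) auto
      thus False using v(2) by simp
    qed
    thus "v \<bullet> (A *\<^sub>v v) > 0" using H quad_form[of A n v] v by simp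
  qed (use H in simp_all)
qed

lemma Q_unit: assumes "m < n" shows "Q n A (\<lambda>i. if i = m then 1 else 0) = A $$ (m,m)"
proof -
  have "\<And>i j. (if i = m then 1 else 0) * A$$(i,j) * (if j = m then (1::real) else 0) = (if i = m then (if j = m then A$$(i,j) else 0) else 0)" by simp
  hence "Q n A (\<lambda>i. if i = m then 1 else 0) = (\<Sum>i<n. if i = m then (\<Sum>j<n. if j = m then A$$(i,j) else 0) else 0)"
    unfolding Q_def by (intro sum.cong) auto
  thus ?thesis using assms by simp
qed

lemma pd_Q: "pos_def_sym n A \<Longrightarrow> \<exists>i<n. x i \<noteq> 0 \<Longrightarrow> Q n A x > 0"
  unfolding pd_iff by (elim conjE) (erule allE, erule mp)

lemma pd_diag_pos: assumes "pos_def_sym n A" "m < n" shows "A $$ (m,m) > 0"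
proof -
  have "\<exists>i<n. (\<lambda>i. if i = m then 1 else (0::real)) i \<noteq> 0" using assms(2) by auto
  from pd_Q[OF assms(1) this] show ?thesis using Q_unit[OF assms(2)] by simp
qed

lemma Q_Suc: "Q (Suc n) A x = x 0 * A $$ (0,0) * x 0 + x 0 * (\<Sum>j<n. A $$ (0, Suc j) * x (Suc j))
   + (\<Sum>i<n. x (Suc i) * A $$ (Suc i, 0)) * x 0 + (\<Sum>i<n. \<Sum>j<n. x (Suc i) * A $$ (Suc i, Suc j) * x (Suc j))"
  unfolding Q_def sum.lessThan_Suc_shift
  by (simp add: sum.distrib sum_distrib_left sum_distrib_right algebra_simps)

lemma det0: assumes "A \<in> carrier_mat 0 0" shows "det A = 1"
proof -
  have "A = 1\<^sub>m 0" using assms by (intro eq_matI) auto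
  thus ?thesis by (simp only: det_one)
qed


lemma hadamard: "pos_def_sym n A \<Longrightarrow> 0 < det A \<and> det A \<le> (\<Prod>i<n. A$$(i,i))"
proof (induction n arbitrary: A)
  case 0
  hence "A \<in> carrier_mat 0 0" unfolding pos_def_sym_def by simp
  thus ?case using det0 by simp
next
  case (Suc n)
  have A: "A \<in> carrier_mat (Suc n) (Suc n)" and AT: "transpose_mat A = A"
    using Suc.prems unfolding pos_def_sym_def by auto
  have Asym: "A$$(i,j) = A$$(j,i)" if "i < Suc n" "j < Suc n" for i j
  proof -
    have "transpose_mat A $$ (i,j) = A $$ (j,i)" using A that by simp
    thus "A$$(i,j) = A$$(j,i)" using AT by simp
  qed
  define a where "a = A$$(0,0)"
  have a: "a > 0" unfolding a_def by (rule pd_diag_pos[OF Suc.prems]) simp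
  define L :: "real mat" where "L = mat (Suc n) (Suc n) (\<lambda>(i,j). if i = j then 1 else if j = 0 then - A$$(i,0)/a else 0)"
  define M :: "real mat" where "M = mat (Suc n) (Suc n) (\<lambda>(i,j). if i = 0 then A$$(0,j) else A$$(i,j) - A$$(i,0)/a * A$$(0,j))"
  have L: "L \<in> carrier_mat (Suc n) (Suc n)" unfolding L_def by simp
  have M: "M \<in> carrier_mat (Suc n) (Suc n)" unfolding M_def by simp
  have detL: "det L = 1"
  proof -
    have "det L = prod_list (diag_mat L)" by (rule det_lower_triangular[OF _ L]) (auto simp: L_def)
    also have "\<dots> = 1" unfolding prod_list_diag_prod using L by (intro prod.neutral) (auto simp: L_def)
    finally show ?thesis .
  qed
  have LA: "L * A = M"
  proof (rule eq_matI)
    fix i j assume ij: "i < dim_row M" "j < dim_col M"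
    hence ij': "i < Suc n" "j < Suc n" using M by auto
    have "(L * A) $$ (i,j) = (\<Sum>k\<in>{0..<Suc n}. L$$(i,k) * A$$(k,j))"
      using ij' L A by (simp add: scalar_prod_def)
    also have "\<dots> = (\<Sum>k\<in>{0..<Suc n}. (if k = i then A$$(k,j) else 0) + (if k = 0 then (if i = 0 then 0 else - A$$(i,0)/a * A$$(k,j)) else 0))"
      using ij' by (intro sum.cong refl) (auto simp: L_def)
    also have "\<dots> = M $$ (i,j)" using ij' by (simp add: sum.distrib M_def)
    finally show "(L * A) $$ (i,j) = M $$ (i,j)" .
  qed (use L A M in auto)
  have detM: "det M = det A" using det_mult[OF L A] detL LA by simp
  have M0: "M$$(Suc i, 0) = 0" if "i < n" for i using a that by (simp add: M_def a_def[symmetric])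
  define B where "B = mat_delete M 0 0"
  have B: "B \<in> carrier_mat n n" using mat_delete_carrier[OF M] unfolding B_def by simp
  have Bij: "B$$(i,j) = A$$(Suc i, Suc j) - A$$(Suc i, 0)/a * A$$(0, Suc j)" if "i < n" "j < n" for i j
    using that unfolding B_def mat_delete_def M_def by simp
  have detA: "det A = a * det B"
  proof -
    have "det M = (\<Sum>i<Suc n. M$$(i,0) * cofactor M i 0)" by (rule laplace_expansion_column[OF M]) simp
    also have "\<dots> = M$$(0,0) * cofactor M 0 0" unfolding sum.lessThan_Suc_shift using M0 by simp
    also have "\<dots> = a * det B" by (simp add: cofactor_def B_def M_def a_def)
    finally show ?thesis using detM by simp
  qed
  have Bsym: "transpose_mat B = B"
  proof (rule eq_matI)
    fix i j assume "i < dim_row B" "j < dim_col B"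
    hence ij: "i < n" "j < n" using B by auto
    have "transpose_mat B $$ (i,j) = B $$ (j,i)" using B ij by simp
    also have "\<dots> = A$$(Suc j, Suc i) - A$$(Suc j, 0)/a * A$$(0, Suc i)" using Bij ij by simp
    also have "\<dots> = A$$(Suc i, Suc j) - A$$(Suc i, 0)/a * A$$(0, Suc j)"
      using Asym[of "Suc j" "Suc i"] Asym[of "Suc j" 0] Asym[of 0 "Suc i"] ij by simp
    also have "\<dots> = B$$(i,j)" using Bij ij by simp
    finally show "transpose_mat B $$ (i,j) = B $$ (i,j)" .
  qed (use B in auto)
  have BQ: "Q n B w = Q (Suc n) A (\<lambda>i. if i = 0 then - (\<Sum>j<n. A$$(0,Suc j) * w j)/a else w (i - 1))" for w
  proof -
    define s where "s = (\<Sum>j<n. A$$(0,Suc j) * w j)"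
    define v where "v = (\<lambda>i. if i = 0 then - s/a else w (i - 1))"
    define R where "R = (\<Sum>i<n. \<Sum>j<n. w i * A$$(Suc i,Suc j) * w j)"
    have s2: "(\<Sum>i<n. w i * A$$(Suc i,0)) = s" unfolding s_def
      by (intro sum.cong refl) (simp add: Asym[of "Suc _" 0] mult.commute)
    have s3: "(\<Sum>i<n. v (Suc i) * A$$(Suc i,0)) = s" unfolding v_def using s2 by simp
    have s4: "(\<Sum>j<n. A$$(0,Suc j) * v (Suc j)) = s" unfolding v_def s_def by simp
    have R2: "(\<Sum>i<n. \<Sum>j<n. v (Suc i) * A$$(Suc i,Suc j) * v (Suc j)) = R" unfolding v_def R_def by simp
    have Q1: "Q (Suc n) A v = v 0 * a * v 0 + v 0 * s + s * v 0 + R"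
      unfolding Q_Suc s3 s4 R2 a_def ..
    have "Q n B w = (\<Sum>i<n. \<Sum>j<n. w i * A$$(Suc i,Suc j) * w j - (w i * A$$(Suc i,0)) * (A$$(0,Suc j) * w j) / a)"
      unfolding Q_def by (intro sum.cong refl) (simp add: Bij algebra_simps)
    also have "\<dots> = R - (\<Sum>i<n. w i * A$$(Suc i,0)) * (\<Sum>j<n. A$$(0,Suc j) * w j) / a"
      unfolding R_def sum_subtractf sum_product sum_divide_distrib by simp
    also have "\<dots> = R - s * s / a" unfolding s2 s_def ..
    finally have Q2: "Q n B w = R - s * s / a" .
    have "Q (Suc n) A v = R - s * s / a" unfolding Q1 using a by (simp add: v_def field_simps)
    thus ?thesis using Q2 unfolding v_def s_def by simp
  qed
  have Bpd: "pos_def_sym n B" unfolding pd_iff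
  proof (intro conjI allI impI B Bsym)
    fix w :: "nat \<Rightarrow> real" assume "\<exists>i<n. w i \<noteq> 0"
    then obtain i where i: "i < n" "w i \<noteq> 0" by blast
    let ?v = "(\<lambda>i. if i = 0 then - (\<Sum>j<n. A$$(0,Suc j) * w j)/a else w (i - 1))"
    have "\<exists>i<Suc n. ?v i \<noteq> 0" using i by (intro exI[of _ "Suc i"]) simp
    from pd_Q[OF Suc.prems this] show "Q n B w > 0" unfolding BQ .
  qed
  from Suc.IH[OF Bpd] have IH: "0 < det B" "det B \<le> (\<Prod>i<n. B$$(i,i))" by auto
  have "(\<Prod>i<n. B$$(i,i)) \<le> (\<Prod>i<n. A$$(Suc i,Suc i))"
  proof (rule prod_mono, rule conjI)
    fix i assume "i \<in> {..<n}"
    hence i: "i < n" by simp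
    show "0 \<le> B$$(i,i)" using pd_diag_pos[OF Bpd i] by simp
    have "B$$(i,i) = A$$(Suc i,Suc i) - A$$(Suc i,0)^2/a"
      using Bij[OF i i] Asym[of 0 "Suc i"] i by (simp add: power2_eq_square)
    also have "\<dots> \<le> A$$(Suc i,Suc i)" using a by simp
    finally show "B$$(i,i) \<le> A$$(Suc i,Suc i)" .
  qed
  hence "det A \<le> a * (\<Prod>i<n. A$$(Suc i,Suc i))" using detA IH a by (simp add: mult_left_mono)
  also have "\<dots> = (\<Prod>i<Suc n. A$$(i,i))" unfolding prod.lessThan_Suc_shift a_def ..
  finally show ?case using detA IH a by simp
qed


lemma finite_multi_idx: "finite (multi_idx n N)"
proof -
  have "multi_idx n N \<subseteq> (\<lambda>f i. if i < n then f i else 0) ` (PiE {..<n} (\<lambda>_. {..N}))"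
  proof
    fix \<alpha> assume "\<alpha> \<in> multi_idx n N"
    hence h: "\<forall>i\<ge>n. \<alpha> i = 0" "(\<Sum>i<n. \<alpha> i) = N" unfolding multi_idx_def by auto
    have le: "\<alpha> i \<le> N" if "i < n" for i using h(2) member_le_sum[of i "{..<n}" \<alpha>] that by auto
    have "\<alpha> = (\<lambda>i. if i < n then restrict \<alpha> {..<n} i else 0)" using h(1) by (auto simp: fun_eq_iff)
    moreover have "restrict \<alpha> {..<n} \<in> PiE {..<n} (\<lambda>_. {..N})" using le by auto
    ultimately show "\<alpha> \<in> (\<lambda>f i. if i < n then f i else 0) ` (PiE {..<n} (\<lambda>_. {..N}))" by (rule image_eqI)
  qed
  thus ?thesis by (rule finite_subset) (intro finite_imageI finite_PiE; simp)
qed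

lemma deriv_coeff:
  assumes D: "((\<lambda>t. hpoly_eval n N c (\<lambda>i. 1 + (if i = j then t else 0))) has_real_derivative k) (at 0)"
    and j: "j < n"
  shows "(\<Sum>\<alpha>\<in>multi_idx n N. c \<alpha> * real (\<alpha> j)) = k"
proof -
  have eq: "hpoly_eval n N c (\<lambda>i. 1 + (if i = j then t else 0)) = (\<Sum>\<alpha>\<in>multi_idx n N. c \<alpha> * (1 + t) ^ \<alpha> j)" for t
    unfolding hpoly_eval_def
  proof (intro sum.cong refl)
    fix \<alpha> :: "nat \<Rightarrow> nat"
    have "(\<Prod>i<n. (1 + (if i = j then t else 0)) ^ \<alpha> i) = (\<Prod>i<n. if i = j then (1 + t) ^ \<alpha> i else 1)"
      by (intro prod.cong) auto
    also have "\<dots> = (1 + t) ^ \<alpha> j" using j by simp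
    finally show "c \<alpha> * (\<Prod>i<n. (1 + (if i = j then t else 0)) ^ \<alpha> i) = c \<alpha> * (1 + t) ^ \<alpha> j" by simp
  qed
  have D2: "((\<lambda>t. \<Sum>\<alpha>\<in>multi_idx n N. c \<alpha> * (1 + t) ^ \<alpha> j) has_real_derivative
      (\<Sum>\<alpha>\<in>multi_idx n N. c \<alpha> * (real (\<alpha> j) * (1 + 0) ^ (\<alpha> j - 1)))) (at 0)"
    by (intro DERIV_sum DERIV_cmult) (auto intro!: derivative_eq_intros)
  from D have D1: "((\<lambda>t. \<Sum>\<alpha>\<in>multi_idx n N. c \<alpha> * (1 + t) ^ \<alpha> j) has_real_derivative k) (at 0)"
    unfolding eq .
  from DERIV_unique[OF D2 D1] show ?thesis by simp
qed

lemma amgm: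
  fixes n N :: nat and c :: "(nat \<Rightarrow> nat) \<Rightarrow> real" and k :: real
  assumes coeff_nonneg: "\<forall>\<alpha>\<in>multi_idx n N. c \<alpha> \<ge> 0"
    and p_e: "hpoly_eval n N c (\<lambda>i. 1) = 1"
    and k_pos: "k > 0"
    and partials: "\<forall>j<n. ((\<lambda>t. hpoly_eval n N c (\<lambda>i. 1 + (if i = j then t else 0)))
                          has_real_derivative k) (at 0)"
    and n: "n > 0" and x: "\<forall>i<n. x i > 0"
  shows "hpoly_eval n N c x powr (1 / real N) \<ge> (\<Prod>i<n. x i) powr (1 / real n)"
proof -
  define S where "S = multi_idx n N"
  have fin: "finite S" unfolding S_def by (rule finite_multi_idx)
  have c0: "\<And>\<alpha>. \<alpha> \<in> S \<Longrightarrow> c \<alpha> \<ge> 0" using coeff_nonneg unfolding S_def by blast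
  have csum: "(\<Sum>\<alpha>\<in>S. c \<alpha>) = 1" using p_e unfolding hpoly_eval_def S_def by simp
  have ck: "(\<Sum>\<alpha>\<in>S. c \<alpha> * real (\<alpha> j)) = k" if "j < n" for j
    unfolding S_def using deriv_coeff[OF partials[rule_format, OF that] that] .
  have "real n * k = (\<Sum>j<n. \<Sum>\<alpha>\<in>S. c \<alpha> * real (\<alpha> j))" using ck by simp
  also have "\<dots> = (\<Sum>\<alpha>\<in>S. c \<alpha> * real (\<Sum>j<n. \<alpha> j))"
    by (subst sum.swap) (simp add: sum_distrib_left)
  also have "\<dots> = (\<Sum>\<alpha>\<in>S. c \<alpha> * real N)"
    by (intro sum.cong refl) (simp add: S_def multi_idx_def)
  also have "\<dots> = real N" using csum by (simp add: sum_distrib_right[symmetric])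
  finally have Nk: "real N = real n * k" by simp
  have ne: "S \<noteq> {}" using csum by auto
  define y where "y \<alpha> = (\<Prod>i<n. x i ^ \<alpha> i)" for \<alpha> :: "nat \<Rightarrow> nat"
  have ypos: "y \<alpha> > 0" for \<alpha> unfolding y_def using x by (intro prod_pos) auto
  define p where "p = hpoly_eval n N c x"
  have p: "p = (\<Sum>\<alpha>\<in>S. c \<alpha> * y \<alpha>)" unfolding p_def hpoly_eval_def S_def y_def ..
  have ppos: "p > 0"
  proof -
    have nn: "\<And>\<alpha>. \<alpha> \<in> S \<Longrightarrow> c \<alpha> * y \<alpha> \<ge> 0" using c0 ypos by (simp add: less_imp_le)
    hence "p \<ge> 0" unfolding p by (rule sum_nonneg)
    moreover have "p \<noteq> 0"
    proof
      assume "p = 0"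
      hence "\<forall>\<alpha>\<in>S. c \<alpha> * y \<alpha> = 0" using sum_nonneg_eq_0_iff[of S "\<lambda>\<alpha>. c \<alpha> * y \<alpha>", OF fin nn] unfolding p by blast
      hence "\<forall>\<alpha>\<in>S. c \<alpha> = 0" using ypos by (metis less_irrefl mult_eq_0_iff)
      hence "(\<Sum>\<alpha>\<in>S. c \<alpha>) = 0" by simp
      thus False using csum by simp
    qed
    ultimately show ?thesis by simp
  qed
  define P where "P = (\<Prod>i<n. x i)"
  have Ppos: "P > 0" unfolding P_def using x by (intro prod_pos) auto
  have "ln (\<Sum>\<alpha>\<in>S. c \<alpha> *\<^sub>R y \<alpha>) \<ge> (\<Sum>\<alpha>\<in>S. c \<alpha> * ln (y \<alpha>))"
    by (rule concave_on_sum[OF fin ne ln_concave csum c0]) (use ypos in auto)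
  hence J: "ln p \<ge> (\<Sum>\<alpha>\<in>S. c \<alpha> * ln (y \<alpha>))" unfolding p by simp
  have lny: "ln (y \<alpha>) = (\<Sum>i<n. real (\<alpha> i) * ln (x i))" for \<alpha>
    unfolding y_def using x by (subst ln_prod) (auto simp: ln_realpow)
  have "(\<Sum>\<alpha>\<in>S. c \<alpha> * ln (y \<alpha>)) = (\<Sum>\<alpha>\<in>S. \<Sum>i<n. ln (x i) * (c \<alpha> * real (\<alpha> i)))"
    unfolding lny by (simp add: sum_distrib_left algebra_simps)
  also have "\<dots> = (\<Sum>i<n. \<Sum>\<alpha>\<in>S. ln (x i) * (c \<alpha> * real (\<alpha> i)))" by (rule sum.swap)
  also have "\<dots> = (\<Sum>i<n. ln (x i) * (\<Sum>\<alpha>\<in>S. c \<alpha> * real (\<alpha> i)))" by (simp add: sum_distrib_left)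
  also have "\<dots> = (\<Sum>i<n. ln (x i) * k)" using ck by simp
  also have "\<dots> = k * ln P" unfolding P_def using x by (subst ln_prod) (auto simp: sum_distrib_left mult.commute)
  finally have lnp: "ln p \<ge> k * ln P" using J by simp
  have Npos: "real N > 0" using Nk n k_pos by simp
  have "(1 / real n) * ln P = (1 / real N) * (k * ln P)" using Nk n k_pos by (simp add: field_simps)
  also have "\<dots> \<le> (1 / real N) * ln p" using lnp Npos by (intro mult_left_mono) auto
  finally have "exp ((1 / real n) * ln P) \<le> exp ((1 / real N) * ln p)" by simp
  thus ?thesis using ppos Ppos unfolding p_def[symmetric] P_def[symmetric] powr_def by simp
qed


lemma poly_linprod_root: "a \<in> set ls \<Longrightarrow> poly (\<Prod>b\<leftarrow>ls. [:- b, 1:]) a = (0::real)"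
  by (induct ls) auto

lemma poly_linprod_0: "poly (\<Prod>b\<leftarrow>ls. [:- b, 1:]) 0 = (-1) ^ length ls * prod_list (ls :: real list)"
  by (induct ls) auto

lemma eig_facts:
  assumes pd: "pos_def_sym n A" and ev: "sorted_eigenvalues n A ls"
  shows "(\<forall>i<n. ls ! i > 0) \<and> det A = (\<Prod>i<n. ls ! i)"
proof -
  have A: "A \<in> carrier_mat n n" using pd unfolding pos_def_sym_def by simp
  have len: "length ls = n" and cp: "char_poly A = (\<Prod>a\<leftarrow>ls. [:-a,1:])"
    using ev unfolding sorted_eigenvalues_def by auto
  have pos: "a > 0" if "a \<in> set ls" for a
  proof -
    have "poly (char_poly A) a = 0" unfolding cp using that by (rule poly_linprod_root)
    hence "eigenvalue A a" using eigenvalue_root_char_poly[OF A] by simp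
    then obtain v where v: "eigenvector A v a" unfolding eigenvalue_def by blast
    hence v1: "v \<in> carrier_vec n" "v \<noteq> 0\<^sub>v n" "A *\<^sub>v v = a \<cdot>\<^sub>v v" using A unfolding eigenvector_def by auto
    have "v \<bullet> (A *\<^sub>v v) > 0" using pd v1(1,2) unfolding pos_def_sym_def by blast
    hence "a * (v \<bullet> v) > 0" using v1(3) v1(1) by simp
    moreover have "v \<bullet> v \<ge> 0" unfolding scalar_prod_def by (intro sum_nonneg) simp
    ultimately show "a > 0" by (simp add: zero_less_mult_iff)
  qed
  have cm: "char_matrix A 0 = A" using A by (intro eq_matI) (auto simp: char_matrix_def)
  have mA: "- A = (-1) \<cdot>\<^sub>m A" using A by (intro eq_matI) auto
  have "(-1) ^ n * det A = poly (char_poly A) 0"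
    unfolding char_poly_matrix[OF A] cm mA det_smult using A by simp
  also have "\<dots> = (-1) ^ n * prod_list ls" unfolding cp poly_linprod_0 len ..
  finally have "det A = prod_list ls" by simp
  also have "\<dots> = (\<Prod>i<n. ls ! i)" by (simp add: prod.list_conv_set_nth len atLeast0LessThan)
  finally show ?thesis using pos len by auto
qed

theorem mainTheorem13:
  fixes n N :: nat and c :: "(nat \<Rightarrow> nat) \<Rightarrow> real" and k :: real
  assumes coeff_nonneg: "\<forall>\<alpha>\<in>multi_idx n N. c \<alpha> \<ge> 0"
    and p_e: "hpoly_eval n N c (\<lambda>i. 1) = 1"
    and k_pos: "k > 0"
    and partials: "\<forall>j<n. ((\<lambda>t. hpoly_eval n N c (\<lambda>i. 1 + (if i = j then t else 0)))
                          has_real_derivative k) (at 0)"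
  shows "\<forall>A. pos_def_sym n A \<longrightarrow>
           hpoly_eval n N c (\<lambda>i. A $$ (i, i)) powr (1 / real N) \<ge> det A powr (1 / real n)
         \<and> (\<forall>ls. sorted_eigenvalues n A ls \<longrightarrow>
              hpoly_eval n N c (\<lambda>i. ls ! i) powr (1 / real N) \<ge> det A powr (1 / real n))"
proof (intro allI impI)
  fix A assume pd: "pos_def_sym n A"
  show "hpoly_eval n N c (\<lambda>i. A $$ (i, i)) powr (1 / real N) \<ge> det A powr (1 / real n)
         \<and> (\<forall>ls. sorted_eigenvalues n A ls \<longrightarrow>
              hpoly_eval n N c (\<lambda>i. ls ! i) powr (1 / real N) \<ge> det A powr (1 / real n))"
  proof (cases "n = 0")
    case True
    have p1: "hpoly_eval n N c x = 1" for x
      using p_e unfolding hpoly_eval_def True by simp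
    have "A \<in> carrier_mat 0 0" using pd True unfolding pos_def_sym_def by simp
    hence "det A = 1" by (rule det0)
    thus ?thesis using p1 by simp
  next
    case False
    hence n: "n > 0" by simp
    note am = amgm[OF coeff_nonneg p_e k_pos partials n]
    have H: "0 < det A" "det A \<le> (\<Prod>i<n. A$$(i,i))" using hadamard[OF pd] by auto
    have dpos: "\<forall>i<n. A$$(i,i) > 0" using pd_diag_pos[OF pd] by blast
    have "det A powr (1 / real n) \<le> (\<Prod>i<n. A$$(i,i)) powr (1 / real n)"
      using H by (intro powr_mono2) auto
    also have "\<dots> \<le> hpoly_eval n N c (\<lambda>i. A $$ (i, i)) powr (1 / real N)"
      using am[of "\<lambda>i. A$$(i,i)"] dpos by simp
    finally have i: "det A powr (1 / real n) \<le> hpoly_eval n N c (\<lambda>i. A $$ (i, i)) powr (1 / real N)" .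
    have ii: "hpoly_eval n N c (\<lambda>i. ls ! i) powr (1 / real N) \<ge> det A powr (1 / real n)"
      if ev: "sorted_eigenvalues n A ls" for ls
    proof -
      from eig_facts[OF pd ev] have e: "\<forall>i<n. ls ! i > 0" "det A = (\<Prod>i<n. ls ! i)" by auto
      show ?thesis unfolding e(2) using am[of "\<lambda>i. ls ! i"] e(1) by simp
    qed
    show ?thesis using i ii by blast
  qed
qed

end
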